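(* Fix a constant $h>0$. Consider a round $r$ in which every agent has a non-null adoption, i.e. $Z_0(r-1)=0$, so that $M=Nh\log N$ tokens are disseminated, of which $M_k=Z_k(r-1)\,h\log N$ carry arm $a_k$. Suppose the final positions of the tokens are independent and each token ends at each given agent $i$ with probability in $\left[\frac1N-\frac1{N^3},\frac1N+\frac1{N^3}\right]$, and agent $i$ sets $a_i(r)$ to the value of a uniformly random token among those ending at $i$ (and $a_i(r)=0$ if none). Then there is a sequence $\epsilon_N\to0$ (depending only on $N$ and $h$) such that for every agent $i$, every $k\in\{1,\dots,K\}$ and every such adoption profile $\mathcal X(r-1)$, $$\bigl|\mathbb P(a_i(r)=a_k\mid \mathcal X(r-1))-Q_k(r-1)\bigr|\le \epsilon_N\,Q_k(r-1);$$ in particular $\lim_{N\to\infty}\mathbb P(a_i(r)=a_k\mid\mathcal X(r-1))=Q_k(r-1)$.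
   Context: $N$ agents, $K$ arms. Each agent $i$ has adoption $\omega_i(r)\in\{0,1,\dots,K\}$ after round $r$ ($0$ means no preference). $Z_k(r)=|\{i:\omega_i(r)=k\}|$, $Q_k(r)=Z_k(r)/N$, and $\mathcal X(r)$ denotes the full adoption profile $(\omega_1(r),\dots,\omega_N(r))$. In the disseminating stage of round $r$, every agent with non-null adoption emits $h\log N$ tokens each carrying its current adoption. *)

theory Defs
  imports Complex_Main "HOL-Library.FuncSet"
begin

definition tok_per_agent :: "real \<Rightarrow> nat \<Rightarrow> nat" where
  "tok_per_agent h N = nat \<lceil>h * ln (real N)\<rceil>"

definition Zcount :: "nat \<Rightarrow> (nat \<Rightarrow> nat) \<Rightarrow> nat \<Rightarrow> nat" where
  "Zcount N \<omega> k = card {a. a < N \<and> \<omega> a = k}"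

definition Qfrac :: "nat \<Rightarrow> (nat \<Rightarrow> nat) \<Rightarrow> nat \<Rightarrow> real" where
  "Qfrac N \<omega> k = real (Zcount N \<omega> k) / real N"

text \<open>Agents are 0..N-1 with adoption profile \<omega>; each agent a emits L tokens,
  token j (j < N*L) is emitted by agent j div L and carries arm \<omega> (j div L).
  Token j ends at agent b with probability p j b, independently over tokens,
  so an outcome pos (final positions of all tokens) has probability
  prod_j p j (pos j).  Given the outcome, agent i picks a uniformly random token
  among those ending at i (probability of arm k = fraction of those tokens
  carrying k; 0 if no token ends at i, via x/0 = 0).\<close>
definition prob_adopt ::
  "nat \<Rightarrow> nat \<Rightarrow> (nat \<Rightarrow> nat) \<Rightarrow> (nat \<Rightarrow> nat \<Rightarrow> real) \<Rightarrow> nat \<Rightarrow> nat \<Rightarrow> real" where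
  "prob_adopt N L \<omega> p i k =
     (\<Sum>pos \<in> PiE {..<N*L} (\<lambda>_. {..<N}).
        (\<Prod>j<N*L. p j (pos j)) *
        (real (card {j \<in> {..<N*L}. pos j = i \<and> \<omega> (j div L) = k})
         / real (card {j \<in> {..<N*L}. pos j = i})))"

end

theory Submission
  imports Defs "HOL-Real_Asymp.Real_Asymp"
begin


definition EE :: "(nat \<Rightarrow> nat \<Rightarrow> real) \<Rightarrow> nat \<Rightarrow> nat set \<Rightarrow> ((nat \<Rightarrow> nat) \<Rightarrow> real) \<Rightarrow> real" where
  "EE p N A g = (\<Sum>pos \<in> PiE A (\<lambda>_. {..<N}). (\<Prod>j\<in>A. p j (pos j)) * g pos)"

lemma EE_insert:
  assumes "finite A" "j \<notin> A"
  shows "EE p N (insert j A) g = (\<Sum>b<N. p j b * EE p N A (\<lambda>pos. g (pos(j:=b))))"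
proof -
  have "EE p N (insert j A) g =
     (\<Sum>x \<in> {..<N} \<times> PiE A (\<lambda>_. {..<N}). (\<Prod>l\<in>insert j A. p l (((snd x)(j:=fst x)) l)) * g ((snd x)(j:=fst x)))"
    unfolding EE_def PiE_insert_eq
    by (subst sum.reindex[OF inj_combinator[OF assms(2)]]) (simp add: case_prod_beta)
  also have "\<dots> = (\<Sum>x \<in> {..<N} \<times> PiE A (\<lambda>_. {..<N}). p j (fst x) * ((\<Prod>l\<in>A. p l (snd x l)) * g ((snd x)(j:=fst x))))"
  proof (rule sum.cong[OF refl])
    fix x assume "x \<in> {..<N} \<times> PiE A (\<lambda>_. {..<N})"
    have "(\<Prod>l\<in>A. p l (((snd x)(j:=fst x)) l)) = (\<Prod>l\<in>A. p l (snd x l))"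
      using assms(2) by (intro prod.cong) auto
    then show "(\<Prod>l\<in>insert j A. p l (((snd x)(j:=fst x)) l)) * g ((snd x)(j:=fst x)) = p j (fst x) * ((\<Prod>l\<in>A. p l (snd x l)) * g ((snd x)(j:=fst x)))"
      using assms by (simp add: prod.insert)
  qed
  also have "\<dots> = (\<Sum>b<N. p j b * EE p N A (\<lambda>pos. g (pos(j:=b))))"
    unfolding EE_def sum_distrib_left by (simp add: sum.cartesian_product case_prod_beta)
  finally show ?thesis .
qed

lemma EE_nonneg:
  assumes "\<And>j b. j \<in> A \<Longrightarrow> b < N \<Longrightarrow> p j b \<ge> 0"
      and "\<And>pos. pos \<in> PiE A (\<lambda>_. {..<N}) \<Longrightarrow> g pos \<ge> 0"
  shows "EE p N A g \<ge> 0"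
  unfolding EE_def
proof (rule sum_nonneg)
  fix pos assume pos: "pos \<in> PiE A (\<lambda>_. {..<N})"
  have "(\<Prod>j\<in>A. p j (pos j)) \<ge> 0"
    using pos assms(1) by (intro prod_nonneg) (auto simp: PiE_iff)
  then show "(\<Prod>j\<in>A. p j (pos j)) * g pos \<ge> 0" using assms(2)[OF pos] by simp
qed

lemma EE_diff: "EE p N A (\<lambda>x. f x - g x) = EE p N A f - EE p N A g"
  unfolding EE_def by (simp add: right_diff_distrib sum_subtractf)

lemma EE_mono:
  assumes "\<And>j b. j \<in> A \<Longrightarrow> b < N \<Longrightarrow> p j b \<ge> 0"
      and "\<And>pos. pos \<in> PiE A (\<lambda>_. {..<N}) \<Longrightarrow> f pos \<le> g pos"
  shows "EE p N A f \<le> EE p N A g"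
proof -
  have "EE p N A (\<lambda>x. g x - f x) \<ge> 0" using assms by (intro EE_nonneg) auto
  then show ?thesis by (simp add: EE_diff)
qed

lemma EE_sum: "EE p N A (\<lambda>pos. \<Sum>j\<in>S. f j pos) = (\<Sum>j\<in>S. EE p N A (f j))"
  unfolding EE_def by (simp add: sum_distrib_left sum.swap[of _ S])

lemma EE_cmult: "EE p N A (\<lambda>pos. c * f pos) = c * EE p N A f"
  unfolding EE_def by (simp add: sum_distrib_left mult.left_commute)

lemma EE_cong: "(\<And>pos. pos \<in> PiE A (\<lambda>_. {..<N}) \<Longrightarrow> f pos = g pos) \<Longrightarrow> EE p N A f = EE p N A g"
  unfolding EE_def by (intro sum.cong) auto

lemma sum_if_trick:
  assumes "(\<Sum>b<N. p b) = (1::real)" "i < (N::nat)"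
  shows "(\<Sum>b<N. p b * (if b = i then X else Y)) = p i * X + (1 - p i) * Y"
proof -
  have "(\<Sum>b<N. p b * (if b = i then X else Y)) = (\<Sum>b<N. p b * Y + (if b = i then p b * (X - Y) else 0))"
    by (intro sum.cong) (auto simp: algebra_simps)
  also have "\<dots> = Y + p i * (X - Y)"
  proof -
    have d: "(\<Sum>b<N. if b = i then p b * (X - Y) else 0) = p i * (X - Y)"
      using assms(2) by (simp add: sum.delta[of "{..<N}" i "\<lambda>b. p b * (X - Y)"])
    show ?thesis using assms d by (simp add: sum.distrib sum_distrib_right[symmetric])
  qed
  finally show ?thesis by (simp add: algebra_simps)
qed

lemma EE_one:
  assumes "finite A" "\<And>j. j \<in> A \<Longrightarrow> (\<Sum>b<N. p j b) = 1"
  shows "EE p N A (\<lambda>_. 1) = 1"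
  using assms
proof (induction A rule: finite_induct)
  case empty
  then show ?case by (simp add: EE_def)
next
  case (insert j A)
  then show ?case by (simp add: EE_insert)
qed

definition cnt :: "nat set \<Rightarrow> nat \<Rightarrow> (nat \<Rightarrow> nat) \<Rightarrow> nat" where
  "cnt A i pos = card {l\<in>A. pos l = i}"

lemma cnt_upd:
  assumes "finite A" "j \<notin> A"
  shows "cnt (insert j A) i (pos(j:=b)) = cnt A i pos + (if b = i then 1 else 0)"
proof -
  have e: "{l\<in>insert j A. (pos(j:=b)) l = i} = (if b = i then insert j {l\<in>A. pos l = i} else {l\<in>A. pos l = i})"
    using assms(2) by auto
  show ?thesis unfolding cnt_def e using assms by auto
qed


lemma F_eq:
  assumes "finite J" "j \<in> J" "i < N"
  shows "EE p N J (\<lambda>pos. of_bool (pos j = i) / real (cnt J i pos))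
       = p j i * EE p N (J - {j}) (\<lambda>pos. 1 / (real (cnt (J - {j}) i pos) + 1))"
proof -
  define A where "A = J - {j}"
  have J: "J = insert j A" "finite A" "j \<notin> A" using assms unfolding A_def by auto
  have "EE p N J (\<lambda>pos. of_bool (pos j = i) / real (cnt J i pos))
      = (\<Sum>b<N. p j b * EE p N A (\<lambda>pos. of_bool (b = i) / real (cnt A i pos + (if b = i then 1 else 0))))"
    unfolding J(1) using J(2,3) by (simp add: EE_insert cnt_upd)
  also have "\<dots> = (\<Sum>b<N. if b = i then p j i * EE p N A (\<lambda>pos. 1 / (real (cnt A i pos) + 1)) else 0)"
    by (intro sum.cong) (auto simp: EE_def add.commute)
  also have "\<dots> = p j i * EE p N A (\<lambda>pos. 1 / (real (cnt A i pos) + 1))"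
    using assms(3) by (simp add: sum.delta[of "{..<N}" i])
  finally show ?thesis unfolding A_def .
qed

lemma H_eq:
  assumes "finite J" "j \<in> J" "j' \<in> J" "j \<noteq> j'" "i < N" "(\<Sum>b<N. p j' b) = 1"
  shows "EE p N (J - {j}) (\<lambda>pos. 1 / (real (cnt (J - {j}) i pos) + 1))
       = p j' i * EE p N (J - {j, j'}) (\<lambda>pos. 1 / (real (cnt (J - {j, j'}) i pos) + 2))
         + (1 - p j' i) * EE p N (J - {j, j'}) (\<lambda>pos. 1 / (real (cnt (J - {j, j'}) i pos) + 1))"
proof -
  define A where "A = J - {j, j'}"
  have J: "J - {j} = insert j' A" "finite A" "j' \<notin> A" using assms unfolding A_def by auto
  have "EE p N (J - {j}) (\<lambda>pos. 1 / (real (cnt (J - {j}) i pos) + 1))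
      = (\<Sum>b<N. p j' b * EE p N A (\<lambda>pos. 1 / (real (cnt A i pos + (if b = i then 1 else 0)) + 1)))"
    unfolding J(1) using J(2,3) by (simp add: EE_insert cnt_upd)
  also have "\<dots> = (\<Sum>b<N. p j' b * (if b = i then EE p N A (\<lambda>pos. 1 / (real (cnt A i pos) + 2))
                                   else EE p N A (\<lambda>pos. 1 / (real (cnt A i pos) + 1))))"
    by (intro sum.cong refl) (auto intro!: EE_cong simp: add.assoc)
  also note sum_if_trick[OF assms(6,5)]
  finally show ?thesis unfolding A_def .
qed

lemma P0_bound:
  assumes "finite A" "\<And>j b. j \<in> A \<Longrightarrow> b < N \<Longrightarrow> 0 \<le> p j b"
    "\<And>j. j \<in> A \<Longrightarrow> (\<Sum>b<N. p j b) = 1" "\<And>j. j \<in> A \<Longrightarrow> a \<le> p j i" "\<And>j. j \<in> A \<Longrightarrow> p j i \<le> 1" "i < N"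
  shows "EE p N A (\<lambda>pos. of_bool (cnt A i pos = 0)) \<le> (1 - a) ^ card A"
  using assms
proof (induction A rule: finite_induct)
  case empty
  then show ?case by (simp add: EE_def cnt_def)
next
  case (insert j A)
  let ?E = "EE p N A (\<lambda>pos. of_bool (cnt A i pos = 0))"
  have IH: "?E \<le> (1 - a) ^ card A" using insert by auto
  have E0: "?E \<ge> 0" using insert by (intro EE_nonneg) auto
  have "EE p N (insert j A) (\<lambda>pos. of_bool (cnt (insert j A) i pos = 0))
     = (\<Sum>b<N. p j b * (if b = i then 0 else ?E))"
    using insert by (simp add: EE_insert cnt_upd) (intro sum.cong refl, auto simp: EE_def)
  also have "\<dots> = (1 - p j i) * ?E"
    using sum_if_trick[of "p j" N i 0 ?E] insert by simp
  also have "\<dots> \<le> (1 - a) * (1 - a) ^ card A"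
    using insert IH E0 by (intro mult_mono) (auto intro: order.trans[of a "p j i" 1])
  finally show ?case using insert by simp
qed

lemma frac_aux: assumes "(x::real) \<ge> 0" shows "1 / (x + 1) - 1 / (x + 2) \<le> 1 / (x + 2)"
proof -
  have "1 / (x + 1) - 1 / (x + 2) = 1 / ((x + 1) * (x + 2))" using assms by (simp add: field_simps)
  also have "\<dots> \<le> 1 / (x + 2)" using assms by (intro divide_left_mono) (auto simp: algebra_simps intro!: add_pos_nonneg mult_nonneg_nonneg)
  finally show ?thesis .
qed

definition HH where "HH p N J i j = EE p N (J - {j}) (\<lambda>pos. 1 / (real (cnt (J - {j}) i pos) + 1))"

lemma HH_nonneg:
  assumes "\<And>j b. j \<in> J \<Longrightarrow> b < N \<Longrightarrow> 0 \<le> p j b"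
  shows "HH p N J i j \<ge> 0"
  unfolding HH_def using assms by (intro EE_nonneg) auto

lemma HH_ratio:
  assumes "finite J" "j \<in> J" "j' \<in> J" "i < N"
    "\<And>j b. j \<in> J \<Longrightarrow> b < N \<Longrightarrow> 0 \<le> p j b"
    "\<And>j. j \<in> J \<Longrightarrow> (\<Sum>b<N. p j b) = 1"
    "\<And>j. j \<in> J \<Longrightarrow> a \<le> p j i" "\<And>j. j \<in> J \<Longrightarrow> p j i \<le> c" "c \<le> 1" "a \<le> c"
  shows "HH p N J i j' \<le> (1 + (c - a)) * HH p N J i j"
proof (cases "j = j'")
  case True
  then show ?thesis using HH_nonneg[of J N p i j] assms by (simp add: algebra_simps mult_right_mono)
next
  case False
  define \<alpha> where "\<alpha> = EE p N (J - {j, j'}) (\<lambda>pos. 1 / (real (cnt (J - {j, j'}) i pos) + 2))"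
  define \<beta> where "\<beta> = EE p N (J - {j, j'}) (\<lambda>pos. 1 / (real (cnt (J - {j, j'}) i pos) + 1))"
  have h1: "HH p N J i j = p j' i * \<alpha> + (1 - p j' i) * \<beta>"
    unfolding HH_def \<alpha>_def \<beta>_def using H_eq[of J j j' i N p] assms False by auto
  have h2: "HH p N J i j' = p j i * \<alpha> + (1 - p j i) * \<beta>"
    unfolding HH_def \<alpha>_def \<beta>_def using H_eq[of J j' j i N p] assms False by (auto simp: insert_commute)
  have nn: "\<And>j0 b. j0 \<in> J - {j, j'} \<Longrightarrow> b < N \<Longrightarrow> 0 \<le> p j0 b" using assms(5) by auto
  have a0: "\<alpha> \<ge> 0" unfolding \<alpha>_def using nn by (intro EE_nonneg) auto
  have ab: "\<alpha> \<le> \<beta>" unfolding \<alpha>_def \<beta>_def using nn by (intro EE_mono) (auto simp: frac_le)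
  have ba: "\<beta> - \<alpha> \<le> \<alpha>"
  proof -
    have "\<beta> - \<alpha> = EE p N (J - {j, j'}) (\<lambda>pos. 1 / (real (cnt (J - {j, j'}) i pos) + 1) - 1 / (real (cnt (J - {j, j'}) i pos) + 2))"
      unfolding \<alpha>_def \<beta>_def by (simp add: EE_diff)
    also have "\<dots> \<le> \<alpha>" unfolding \<alpha>_def
    proof (rule EE_mono[OF nn])
      fix pos
      show "1 / (real (cnt (J - {j, j'}) i pos) + 1) - 1 / (real (cnt (J - {j, j'}) i pos) + 2)
          \<le> 1 / (real (cnt (J - {j, j'}) i pos) + 2)"
        by (rule frac_aux) simp
    qed auto
    finally show ?thesis .
  qed
  have pj: "a \<le> p j i" "p j i \<le> c" "a \<le> p j' i" "p j' i \<le> c" using assms by auto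
  have "HH p N J i j' - HH p N J i j = (p j' i - p j i) * (\<beta> - \<alpha>)"
    unfolding h1 h2 by (simp add: algebra_simps)
  also have "\<dots> \<le> (c - a) * (\<beta> - \<alpha>)"
    using pj ab by (intro mult_right_mono) auto
  also have "\<dots> \<le> (c - a) * \<alpha>"
    using pj ba by (intro mult_left_mono) auto
  also have "\<dots> \<le> (c - a) * HH p N J i j"
  proof -
    have "\<alpha> \<le> HH p N J i j" unfolding h1
      using pj ab assms(9) mult_nonneg_nonneg[of "1 - p j' i" "\<beta> - \<alpha>"] by (simp add: algebra_simps)
    then show ?thesis using pj by (intro mult_left_mono) auto
  qed
  finally show ?thesis by (simp add: algebra_simps)
qed


lemma count_div:
  "card {j. j < N * L \<and> P (j div L)} = L * card {a. a < N \<and> P a}"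
proof (cases "L = 0")
  case True then show ?thesis by simp
next
  case False
  show ?thesis
  proof (induction N)
    case 0 then show ?case by simp
  next
    case (Suc N)
    have e: "{j. j < Suc N * L \<and> P (j div L)} = {j. j < N * L \<and> P (j div L)} \<union> (if P N then {N*L..<N*L+L} else {})"
    proof (intro set_eqI iffI)
      fix j assume j: "j \<in> {j. j < Suc N * L \<and> P (j div L)}"
      show "j \<in> {j. j < N * L \<and> P (j div L)} \<union> (if P N then {N*L..<N*L+L} else {})"
      proof (cases "j < N * L")
        case True then show ?thesis using j by auto
      next
        case False
        then have "j div L = N" using j False
          by (intro div_nat_eqI) (auto simp: algebra_simps)
        then show ?thesis using j False by auto
      qed
    next
      fix j assume j: "j \<in> {j. j < N * L \<and> P (j div L)} \<union> (if P N then {N*L..<N*L+L} else {})"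
      show "j \<in> {j. j < Suc N * L \<and> P (j div L)}"
      proof (cases "j < N * L")
        case True then show ?thesis using j by (auto split: if_splits)
      next
        case False
        then have jj: "P N" "N*L \<le> j" "j < N*L+L" using j by (auto split: if_splits)
        then have "j div L = N"
          by (intro div_nat_eqI) (auto simp: algebra_simps)
        then show ?thesis using jj by auto
      qed
    qed
    have e2: "{a. a < Suc N \<and> P a} = {a. a < N \<and> P a} \<union> (if P N then {N} else {})" using less_Suc_eq by auto
    have d: "{j. j < N * L \<and> P (j div L)} \<inter> {N*L..<N*L+L} = {}" by auto
    have fin: "finite {j. j < N * L \<and> P (j div L)}" by auto
    show ?case unfolding e e2 using Suc card_Un_disjoint[OF fin _ d] by auto
  qed
qed


lemma final_arith:
  fixes Q r P0 e pr :: real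
  assumes "0 \<le> Q" "1 \<le> r" "0 \<le> P0" "P0 \<le> e" "Q * (1 - P0) / r \<le> pr" "pr \<le> r * Q * (1 - P0)"
  shows "\<bar>pr - Q\<bar> \<le> (r - 1 + e) * Q"
proof -
  have "pr - Q \<le> (r - 1 + e) * Q"
  proof -
    have q: "Q * (1 - P0) \<le> Q * 1" using assms by (intro mult_left_mono) auto
    have "r * (Q * (1 - P0)) \<le> r * Q" using assms q by (intro mult_left_mono) auto
    then have "r * Q * (1 - P0) \<le> r * Q" by (simp add: mult.assoc)
    then have "pr \<le> r * Q" using assms(6) by linarith
    moreover have "Q * e \<ge> 0" using assms by simp
    moreover have "(r - 1 + e) * Q = r * Q - Q + Q * e" by (simp add: algebra_simps)
    ultimately show ?thesis by linarith
  qed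
  moreover have "Q - pr \<le> (r - 1 + e) * Q"
  proof -
    have "Q - Q * (1 - P0) / r = Q * (r - 1 + P0) / r" using assms by (simp add: field_simps)
    also have "\<dots> \<le> Q * (r - 1 + P0)"
    proof -
      have X: "0 \<le> Q * (r - 1 + P0)" using assms by (auto intro!: mult_nonneg_nonneg)
      have "Q * (r - 1 + P0) * 1 \<le> Q * (r - 1 + P0) * r" using X assms by (intro mult_left_mono) auto
      then show ?thesis using assms by (simp add: pos_divide_le_eq)
    qed
    also have "\<dots> \<le> (r - 1 + e) * Q" using assms mult_right_mono[of P0 e Q] by (simp add: algebra_simps)
    finally show ?thesis using assms by linarith
  qed
  ultimately show ?thesis by linarith
qed


lemma lim_part1:
  "((\<lambda>x::real. (((1/x + 1/x^3) / (1/x - 1/x^3)) * (1 + ((1/x + 1/x^3) - (1/x - 1/x^3))))^2 - 1) \<longlongrightarrow> 0) at_top"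
  by real_asymp

lemma lim_part2:
  assumes "h > 0"
  shows "((\<lambda>x::real. exp (- (h/2) * ln x)) \<longlongrightarrow> 0) at_top"
  using assms by real_asymp

theorem lemma1:
  fixes h :: real
  assumes "h > 0"
  shows "\<exists>\<epsilon> :: nat \<Rightarrow> real. \<epsilon> \<longlonglongrightarrow> 0 \<and>
    (\<forall>(N::nat) (K::nat) (\<omega>::nat \<Rightarrow> nat) (p::nat \<Rightarrow> nat \<Rightarrow> real) (i::nat) (k::nat).
       (\<forall>a<N. \<omega> a \<in> {1..K}) \<and>
       (\<forall>j<N * tok_per_agent h N.
          (\<forall>b<N. 1 / real N - 1 / real N ^ 3 \<le> p j b \<and> p j b \<le> 1 / real N + 1 / real N ^ 3) \<and>
          (\<Sum>b<N. p j b) = 1) \<and>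
       i < N \<and> k \<in> {1..K}
       \<longrightarrow> \<bar>prob_adopt N (tok_per_agent h N) \<omega> p i k - Qfrac N \<omega> k\<bar>
             \<le> \<epsilon> N * Qfrac N \<omega> k)"
proof -
  define aa where "aa N = 1 / real N - 1 / real N ^ 3" for N :: nat
  define cc where "cc N = 1 / real N + 1 / real N ^ 3" for N :: nat
  define rho where "rho N = (cc N / aa N) * (1 + (cc N - aa N))" for N :: nat
  define eps where "eps N = (if N < 2 then 1 else (rho N)^2 - 1 + exp (- (h/2) * ln (real N)))" for N :: nat
  define f where "f x = (((1/x + 1/x^3) / (1/x - 1/x^3)) * (1 + ((1/x + 1/x^3) - (1/x - 1/x^3))))^2 - 1
                        + exp (- (h/2) * ln x)" for x :: real
  have flim: "(f \<longlongrightarrow> 0) at_top"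
    unfolding f_def using tendsto_add[OF lim_part1 lim_part2[OF assms]] by simp
  have lim: "eps \<longlonglongrightarrow> 0"
  proof -
    have "(\<lambda>N. f (real N)) \<longlonglongrightarrow> 0"
      by (rule filterlim_compose[OF flim filterlim_real_sequentially])
    moreover have "eventually (\<lambda>N. f (real N) = eps N) sequentially"
      using eventually_ge_at_top[of "2::nat"]
      by eventually_elim (simp add: f_def eps_def rho_def aa_def cc_def)
    ultimately show ?thesis by (rule Lim_transform_eventually)
  qed
  have main: "\<bar>prob_adopt N (tok_per_agent h N) \<omega> p i k - Qfrac N \<omega> k\<bar> \<le> eps N * Qfrac N \<omega> k"
    if hyp: "(\<forall>a<N. \<omega> a \<in> {1..K}) \<and>
       (\<forall>j<N * tok_per_agent h N.
          (\<forall>b<N. 1 / real N - 1 / real N ^ 3 \<le> p j b \<and> p j b \<le> 1 / real N + 1 / real N ^ 3) \<and>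
          (\<Sum>b<N. p j b) = 1) \<and>
       i < N \<and> k \<in> {1..K}"
    for N K \<omega> p i k
  proof -
    define L where "L = tok_per_agent h N"
    define J where "J = {..<N * L}"
    define Jk where "Jk = {j \<in> J. \<omega> (j div L) = k}"
    define F where "F j = EE p N J (\<lambda>pos. of_bool (pos j = i) / real (cnt J i pos))" for j
    define P0 where "P0 = EE p N J (\<lambda>pos. of_bool (cnt J i pos = 0))"
    define Z where "Z = Zcount N \<omega> k"
    have iN: "i < N" using hyp by auto
    have pb: "\<And>j b. j \<in> J \<Longrightarrow> b < N \<Longrightarrow> aa N \<le> p j b \<and> p j b \<le> cc N"
      using hyp unfolding J_def L_def aa_def cc_def by auto
    have ps: "\<And>j. j \<in> J \<Longrightarrow> (\<Sum>b<N. p j b) = 1"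
      using hyp unfolding J_def L_def by auto
    have finJ: "finite J" unfolding J_def by simp
    have JkJ: "Jk \<subseteq> J" unfolding Jk_def by auto
    have cardJk: "card Jk = L * Z"
    proof -
      have "Jk = {j. j < N * L \<and> \<omega> (j div L) = k}" unfolding Jk_def J_def by auto
      then show ?thesis unfolding Z_def Zcount_def using count_div[of N L "\<lambda>a. \<omega> a = k"] by simp
    qed
    have cardJ: "card J = N * L" unfolding J_def by simp
    have probF: "prob_adopt N L \<omega> p i k = (\<Sum>j\<in>Jk. F j)"
    proof -
      have "prob_adopt N L \<omega> p i k = EE p N J (\<lambda>pos. real (card {j \<in> J. pos j = i \<and> \<omega> (j div L) = k}) / real (cnt J i pos))"
        unfolding prob_adopt_def EE_def J_def cnt_def by simp
      also have "\<dots> = EE p N J (\<lambda>pos. \<Sum>j\<in>Jk. of_bool (pos j = i) / real (cnt J i pos))"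
      proof (rule EE_cong)
        fix pos
        have "(\<Sum>j\<in>Jk. of_bool (pos j = i) :: real) = real (card (Jk \<inter> {j. pos j = i}))"
          using finJ JkJ finite_subset by (intro sum_of_bool_eq) blast
        also have "Jk \<inter> {j. pos j = i} = {j \<in> J. pos j = i \<and> \<omega> (j div L) = k}" unfolding Jk_def by auto
        finally have e: "(\<Sum>j\<in>Jk. of_bool (pos j = i) :: real) = real (card {j \<in> J. pos j = i \<and> \<omega> (j div L) = k})" .
        show "real (card {j \<in> J. pos j = i \<and> \<omega> (j div L) = k}) / real (cnt J i pos)
            = (\<Sum>j\<in>Jk. of_bool (pos j = i) / real (cnt J i pos))"
          unfolding sum_divide_distrib[symmetric] e by (rule refl)
      qed
      also have "\<dots> = (\<Sum>j\<in>Jk. F j)" unfolding F_def by (rule EE_sum)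
      finally show ?thesis .
    qed
    have TF: "(\<Sum>j\<in>J. F j) = 1 - P0"
    proof -
      have "(\<Sum>j\<in>J. F j) = EE p N J (\<lambda>pos. \<Sum>j\<in>J. of_bool (pos j = i) / real (cnt J i pos))"
        unfolding F_def by (rule EE_sum[symmetric])
      also have "\<dots> = EE p N J (\<lambda>pos. 1 - of_bool (cnt J i pos = 0))"
      proof (rule EE_cong)
        fix pos
        have "(\<Sum>j\<in>J. of_bool (pos j = i) :: real) = real (card (J \<inter> {j. pos j = i}))"
          using finJ by (intro sum_of_bool_eq)
        also have "J \<inter> {j. pos j = i} = {j \<in> J. pos j = i}" by auto
        finally have "(\<Sum>j\<in>J. of_bool (pos j = i) :: real) = real (cnt J i pos)" unfolding cnt_def .
        then show "(\<Sum>j\<in>J. of_bool (pos j = i) / real (cnt J i pos)) = 1 - of_bool (cnt J i pos = 0)"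
          by (simp add: sum_divide_distrib[symmetric])
      qed
      also have "\<dots> = 1 - P0" unfolding P0_def EE_diff using EE_one[OF finJ ps] by simp
      finally show ?thesis .
    qed
    have pnn: "0 \<le> p j b" if "j \<in> J" "b < N" for j b
    proof -
      have N1: "real N \<ge> 1" using that by simp
      have "real N ^ 1 \<le> real N ^ 3" using N1 by (intro power_increasing) auto
      then have "1 / real N ^ 3 \<le> 1 / real N"
        using N1 by (intro divide_left_mono) auto
      then show ?thesis using pb[OF that] unfolding aa_def by linarith
    qed
    have Fnn: "0 \<le> F j" for j
      unfolding F_def using pnn by (intro EE_nonneg) auto
    have P0nn: "0 \<le> P0" unfolding P0_def using pnn by (intro EE_nonneg) auto
    have prob_nn: "0 \<le> (\<Sum>j\<in>Jk. F j)" using Fnn by (intro sum_nonneg) auto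
    have prob_le: "(\<Sum>j\<in>Jk. F j) \<le> 1 - P0"
      unfolding TF[symmetric] using Fnn by (intro sum_mono2[OF finJ JkJ]) auto
    have ZN: "Z \<le> N" unfolding Z_def Zcount_def
      using card_mono[of "{..<N}" "{a. a < N \<and> \<omega> a = k}"] by auto
    have Qeq: "Qfrac N \<omega> k = real Z / real N" unfolding Qfrac_def Z_def ..
    have finJk: "finite Jk" using finite_subset[OF JkJ finJ] .
    show ?thesis
    proof (cases "N < 2")
      case True
      then have e1: "eps N = 1" unfolding eps_def by simp
      show ?thesis
      proof (cases "Z = 0")
        case True
        then have "Jk = {}" using cardJk finJk by simp
        then show ?thesis using True Qeq probF unfolding L_def by simp
      next
        case False
        then have "N = 1" "Z = 1" using ZN \<open>N < 2\<close> by auto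
        then show ?thesis using Qeq probF prob_nn prob_le P0nn e1 unfolding L_def by simp
      qed
    next
      case False
      then have N2: "real N \<ge> 2" by simp
      have Npos: "real N > 0" using N2 by simp
      have N3: "real N ^ 1 < real N ^ 3" using N2 by (intro power_strict_increasing) auto
      have "1 / real N ^ 3 < 1 / real N" using N3 Npos by (intro divide_strict_left_mono) auto
      then have a_pos: "0 < aa N" unfolding aa_def by simp
      have "1 / real N \<le> 1 / 2" using N2 by (intro divide_left_mono) auto
      then have c_le: "cc N \<le> 1" using \<open>1 / real N ^ 3 < 1 / real N\<close> unfolding cc_def by linarith
      have ac: "aa N \<le> cc N" unfolding aa_def cc_def using Npos by simp
      have lnpos: "ln (real N) > 0" using N2 by simp
      have hl: "h * ln (real N) > 0" using assms lnpos by simp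
      have L_ge: "real L \<ge> h * ln (real N)" unfolding L_def tok_per_agent_def
        using hl by (simp add: le_nat_iff)
      have Lpos: "L \<ge> 1" using L_ge hl by (cases L) auto
      have j0: "0 \<in> J" unfolding J_def using Lpos N2 by simp
      have pi_b: "aa N \<le> p j i" "p j i \<le> cc N" if "j \<in> J" for j using pb[OF that iN] by auto
      have Fj: "F j = p j i * HH p N J i j" if "j \<in> J" for j
        unfolding F_def HH_def using F_eq[OF finJ that iN] .
      have ratio: "F j' \<le> rho N * F j" if "j \<in> J" "j' \<in> J" for j j'
      proof -
        have H: "HH p N J i j' \<le> (1 + (cc N - aa N)) * HH p N J i j"
          using HH_ratio[OF finJ that(1,2) iN pnn ps pi_b(1) pi_b(2) c_le ac] by auto
        have Hnn: "HH p N J i j' \<ge> 0" "HH p N J i j \<ge> 0" using HH_nonneg[of J N p] pnn by auto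
        have "F j' \<le> cc N * HH p N J i j'"
          unfolding Fj[OF that(2)] using pi_b[OF that(2)] Hnn by (intro mult_right_mono) auto
        also have "\<dots> \<le> cc N * ((1 + (cc N - aa N)) * HH p N J i j)"
          using H a_pos ac by (intro mult_left_mono) auto
        also have "\<dots> = rho N * (aa N * HH p N J i j)"
          unfolding rho_def using a_pos by (simp add: field_simps)
        also have "\<dots> \<le> rho N * F j"
        proof -
          have "rho N \<ge> 0" unfolding rho_def using a_pos ac by auto
          moreover have "aa N * HH p N J i j \<le> F j"
            unfolding Fj[OF that(1)] using pi_b[OF that(1)] Hnn by (intro mult_right_mono) auto
          ultimately show ?thesis by (intro mult_left_mono)
        qed
        finally show ?thesis .
      qed
      have rho1: "rho N \<ge> 1"
      proof -
        have "cc N / aa N \<ge> 1" using a_pos ac by simp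
        moreover have "1 + (cc N - aa N) \<ge> 1" using ac by simp
        ultimately have "1 * 1 \<le> cc N / aa N * (1 + (cc N - aa N))" by (intro mult_mono) auto
        then show ?thesis unfolding rho_def by simp
      qed
      define r where "r = rho N"
      define m where "m = real (card Jk)"
      define M where "M = real (card J)"
      define T where "T = 1 - P0"
      define F0 where "F0 = F 0"
      define pr where "pr = (\<Sum>j\<in>Jk. F j)"
      have Mpos: "M > 0" unfolding M_def cardJ using Lpos N2 by simp
      have m0: "m \<ge> 0" unfolding m_def by simp
      have Q: "Qfrac N \<omega> k = m / M"
        unfolding Qeq m_def M_def cardJk cardJ using Lpos by simp
      have up1: "pr \<le> m * (r * F0)"
      proof -
        have "pr \<le> (\<Sum>j\<in>Jk. r * F0)" unfolding pr_def r_def F0_def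
          using ratio[OF j0] JkJ by (intro sum_mono) auto
        then show ?thesis unfolding m_def by simp
      qed
      have up2: "M * F0 \<le> r * T"
      proof -
        have "(\<Sum>j\<in>J. F0) \<le> (\<Sum>j\<in>J. r * F j)" unfolding r_def F0_def
          using ratio j0 by (intro sum_mono) auto
        then show ?thesis unfolding M_def T_def TF[symmetric] by (simp add: sum_distrib_left)
      qed
      have lo1: "m * (F0 / r) \<le> pr"
      proof -
        have "(\<Sum>j\<in>Jk. F0 / r) \<le> pr" unfolding pr_def r_def F0_def
          using ratio j0 JkJ rho1 by (intro sum_mono) (auto simp: pos_divide_le_eq mult.commute)
        then show ?thesis unfolding m_def by simp
      qed
      have lo2: "T \<le> M * (r * F0)"
      proof -
        have "(\<Sum>j\<in>J. F j) \<le> (\<Sum>j\<in>J. r * F0)" unfolding r_def F0_def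
          using ratio j0 by (intro sum_mono) auto
        then show ?thesis unfolding M_def T_def TF[symmetric] by simp
      qed
      have r0: "r > 0" using rho1 unfolding r_def by simp
      have Fnn0: "F0 \<ge> 0" unfolding F0_def by (rule Fnn)
      have upper: "pr \<le> r^2 * (m / M) * T"
      proof -
        have "F0 \<le> r * T / M" using up2 Mpos by (simp add: field_simps)
        then have "m * (r * F0) \<le> m * (r * (r * T / M))" using m0 r0 by (intro mult_left_mono) auto
        also have "\<dots> = r^2 * (m / M) * T" by (simp add: power2_eq_square)
        finally show ?thesis using up1 by linarith
      qed
      have lower: "(m / M) * T / r^2 \<le> pr"
      proof -
        have "T / (M * r) \<le> F0" using lo2 Mpos r0 by (simp add: field_simps)
        then have "m * (T / (M * r) / r) \<le> m * (F0 / r)" using m0 r0 by (intro mult_left_mono divide_right_mono) auto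
        moreover have "m * (T / (M * r) / r) = (m / M) * T / r^2" by (simp add: power2_eq_square)
        ultimately show ?thesis using lo1 by linarith
      qed
      define e where "e = exp (- (h/2) * ln (real N))"
      have P0e: "P0 \<le> e"
      proof -
        have "P0 \<le> (1 - aa N) ^ card J" unfolding P0_def
          using P0_bound[OF finJ, where a="aa N" and i=i and p=p and N=N] pnn ps pi_b c_le iN by force
        also have "\<dots> \<le> exp (- aa N) ^ card J"
          using a_pos ac c_le exp_ge_add_one_self[of "- aa N"] by (intro power_mono) auto
        also have "\<dots> = exp (M * (- aa N))" unfolding M_def by (rule exp_of_nat_mult[symmetric])
        also have "\<dots> \<le> e" unfolding e_def
        proof (subst exp_le_cancel_iff)
          have "aa N * M = real L * (1 - 1 / real N ^ 2)"
            unfolding M_def cardJ aa_def using Npos by (simp add: field_simps power3_eq_cube power2_eq_square)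
          moreover have "1 / real N ^ 2 \<le> 1 / 2"
          proof -
            have "2 ^ 2 \<le> real N ^ 2" using N2 by (intro power_mono) auto
            then have "real N ^ 2 \<ge> 2" by simp
            then show ?thesis using Npos by (intro divide_left_mono) auto
          qed
          ultimately have le: "real L * (1 / real N ^ 2) \<le> real L * (1 / 2)" and
             eq: "aa N * M = real L * (1 - 1 / real N ^ 2)" by (auto intro!: mult_left_mono simp del: times_divide_eq_right)
          have eq2: "aa N * M = real L - real L * (1 / real N ^ 2)" using eq by (simp add: right_diff_distrib)
          have "aa N * M \<ge> real L / 2" using eq2 le by linarith
          then show "M * - aa N \<le> - (h / 2) * ln (real N)" using L_ge by (simp add: algebra_simps)
        qed
        finally show ?thesis .
      qed
      have fa: "\<bar>pr - m / M\<bar> \<le> (r^2 - 1 + e) * (m / M)"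
      proof (rule final_arith[OF _ _ P0nn P0e])
        show "0 \<le> m / M" using m0 Mpos by simp
        show "1 \<le> r^2" using rho1 unfolding r_def by (simp add: one_le_power)
        show "m / M * (1 - P0) / r\<^sup>2 \<le> pr" using lower unfolding T_def .
        show "pr \<le> r\<^sup>2 * (m / M) * (1 - P0)" using upper unfolding T_def .
      qed
      have "eps N = r^2 - 1 + e" unfolding eps_def r_def e_def using False by simp
      then show ?thesis using fa probF Q unfolding pr_def L_def by simp
    qed
  qed
  show ?thesis using lim main by blast
qed

end
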